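(* Under the hypotheses of Theorem 2 (stated in the context), every limit point of the trial sequence $\{x^q\}$ generated by PLT is a global minimizer of $f$ on $[0,1]$.
   Context: Algorithm PLT (parallel information algorithm with local tuning) for minimizing $f$ on $[0,1]$; parameters: integer $N\ge1$, reliability parameter $r>1$, small number $\xi>0$. A "trial" is an evaluation of $f$ at a point. Step 0: perform $q(1)>1$ initial trials at $x^1=0$, $x^2=1$ and some interior points $x^3,\dots,x^{q(1)}\in(0,1)$; set $l=1$. At iteration $l$, let $q=q(l)$ be the number of trials made so far. Step 1: order all trial points as $0=x_1<x_2<\dots<x_q=1$ and set $z_i=f(x_i)$. Step 2: for $2\le j\le q$ compute $\mu_j=\max\{\lambda_j,\gamma_j,\xi\}$, where $\lambda_j=\max\{|z_i-z_{i-1}|/(x_i-x_{i-1})^{1/N}: i\in I_j\}$ with $I_2=\{2,3\}$, $I_j=\{j-1,j,j+1\}$ for $3\le j\le q-1$, $I_q=\{q-1,q\}$; and $\gamma_j=\mu\,(x_j-x_{j-1})^{1/N}/(X^{\max})^{1/N}$ with $\mu=\max\{|z_i-z_{i-1}|/(x_i-x_{i-1})^{1/N}:2\le i\le q\}$ and $X^{\max}=\max\{x_i-x_{i-1}:2\le i\le q\}$. Step 3: for $2\le j\le q$ compute the characteristic $R(j)=r\mu_j(x_j-x_{j-1})^{1/N}+\frac{(z_j-z_{j-1})^2}{r\mu_j(x_j-x_{j-1})^{1/N}}-(z_j+z_{j-1})$. Step 4: choose $p=p(l+1)\le q(l)-1$ and distinct indices $t_1,\dots,t_p$ being the indices of the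 $p$ largest characteristics ($t_1=\arg\max\{R(i):1<i\le q\}$, $t_k=\arg\max\{R(i):1<i\le q,\ i\ne t_s, 1\le s\le k-1\}$); the new trial points are $x^{q+k}=\tfrac12(x_{t_k-1}+x_{t_k})-\frac{1}{2r}\left(\frac{|z_{t_k}-z_{t_k-1}|}{\mu_{t_k}}\right)^N\operatorname{sign}(z_{t_k}-z_{t_k-1})$, $1\le k\le p$. Step 5: evaluate $f$ at these $p$ points in parallel, set $q(l+1)=q(l)+p(l+1)$, $l\leftarrow l+1$, and return to Step 1. Hypotheses of Theorem 2: $f:[0,1]\to\mathbb R$ satisfies $|f(x')-f(x'')|\le H|x'-x''|^{1/N}$; PLT runs indefinitely (stopping rule disregarded) producing trial points $\{x^q\}$; $p(l)\le Q<\infty$ for all $l>1$; $x^*$ is a global minimizer of $f$; for each iteration $l$, $j=j(l)$ indexes an interval $[x_{j-1},x_j]$ containing $x^*$, with $K_j=\max\{(z_{j-1}-f(x^* ))(x^*-x_{j-1})^{-1/N},(z_j-f(x^* ))(x_j-x^* )^{-1/N}\}$ and $M_j=|z_{j-1}-z_j|(x_j-x_{j-1})^{-1/N}$; and there is an infinite set of iteration numbers $\{h\}$ such that for all $l\in\{h\}$, $4^{1-1/N}K_j^2\ge M_j^2$ and $r\mu_j\ge 2^{1-1/N}K_j+(4^{1-1/N}K_j^2-M_j^2)^{1/2}$. *)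

theory Defs
  imports "HOL-Analysis.Analysis"
begin

text \<open>Trial points are x 1, x 2, ... (1-based). After q trials, pt x q i (1 \<le> i \<le> q)
  is the i-th smallest trial point, i.e. x_i in the paper's ordering.\<close>

definition pt :: "(nat \<Rightarrow> real) \<Rightarrow> nat \<Rightarrow> nat \<Rightarrow> real" where
  "pt x q i = sorted_list_of_set (x ` {1..q}) ! (i - 1)"

definition zv :: "(real \<Rightarrow> real) \<Rightarrow> (nat \<Rightarrow> real) \<Rightarrow> nat \<Rightarrow> nat \<Rightarrow> real" where
  "zv f x q i = f (pt x q i)"

definition slope :: "(real \<Rightarrow> real) \<Rightarrow> nat \<Rightarrow> (nat \<Rightarrow> real) \<Rightarrow> nat \<Rightarrow> nat \<Rightarrow> real" where
  "slope f N x q i = \<bar>zv f x q i - zv f x q (i - 1)\<bar> / (pt x q i - pt x q (i - 1)) powr (1 / real N)"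

definition Iset :: "nat \<Rightarrow> nat \<Rightarrow> nat set" where
  "Iset q j = {j - 1, j, j + 1} \<inter> {2..q}"

definition lam :: "(real \<Rightarrow> real) \<Rightarrow> nat \<Rightarrow> (nat \<Rightarrow> real) \<Rightarrow> nat \<Rightarrow> nat \<Rightarrow> real" where
  "lam f N x q j = Max (slope f N x q ` Iset q j)"

definition mu_all :: "(real \<Rightarrow> real) \<Rightarrow> nat \<Rightarrow> (nat \<Rightarrow> real) \<Rightarrow> nat \<Rightarrow> real" where
  "mu_all f N x q = Max (slope f N x q ` {2..q})"

definition Xmax :: "(nat \<Rightarrow> real) \<Rightarrow> nat \<Rightarrow> real" where
  "Xmax x q = Max ((\<lambda>i. pt x q i - pt x q (i - 1)) ` {2..q})"

definition gam :: "(real \<Rightarrow> real) \<Rightarrow> nat \<Rightarrow> (nat \<Rightarrow> real) \<Rightarrow> nat \<Rightarrow> nat \<Rightarrow> real" where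
  "gam f N x q j = mu_all f N x q * (pt x q j - pt x q (j - 1)) powr (1 / real N)
                   / (Xmax x q) powr (1 / real N)"

definition muj :: "(real \<Rightarrow> real) \<Rightarrow> nat \<Rightarrow> real \<Rightarrow> (nat \<Rightarrow> real) \<Rightarrow> nat \<Rightarrow> nat \<Rightarrow> real" where
  "muj f N \<xi> x q j = max (max (lam f N x q j) (gam f N x q j)) \<xi>"

definition charR :: "(real \<Rightarrow> real) \<Rightarrow> nat \<Rightarrow> real \<Rightarrow> real \<Rightarrow> (nat \<Rightarrow> real) \<Rightarrow> nat \<Rightarrow> nat \<Rightarrow> real" where
  "charR f N r \<xi> x q j =
     (let d = r * muj f N \<xi> x q j * (pt x q j - pt x q (j - 1)) powr (1 / real N)
      in d + (zv f x q j - zv f x q (j - 1))\<^sup>2 / d - (zv f x q j + zv f x q (j - 1)))"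

definition newpt :: "(real \<Rightarrow> real) \<Rightarrow> nat \<Rightarrow> real \<Rightarrow> real \<Rightarrow> (nat \<Rightarrow> real) \<Rightarrow> nat \<Rightarrow> nat \<Rightarrow> real" where
  "newpt f N r \<xi> x q t =
     (pt x q (t - 1) + pt x q t) / 2
     - 1 / (2 * r) * (\<bar>zv f x q t - zv f x q (t - 1)\<bar> / muj f N \<xi> x q t) ^ N
       * sgn (zv f x q t - zv f x q (t - 1))"

text \<open>PLT f N r xi x q p: the trial sequence x (with q l trials after iteration l and
  p (l+1) new trials at iteration l) is produced by algorithm PLT running indefinitely.
  Ties among characteristics may be broken arbitrarily.\<close>
definition PLT :: "(real \<Rightarrow> real) \<Rightarrow> nat \<Rightarrow> real \<Rightarrow> real \<Rightarrow> (nat \<Rightarrow> real) \<Rightarrow> (nat \<Rightarrow> nat) \<Rightarrow> (nat \<Rightarrow> nat) \<Rightarrow> bool" where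
  "PLT f N r \<xi> x q p \<longleftrightarrow>
     1 < q 1 \<and> x 1 = 0 \<and> x 2 = 1 \<and> (\<forall>i\<in>{3..q 1}. 0 < x i \<and> x i < 1) \<and> inj_on x {1..q 1} \<and>
     (\<forall>l\<ge>1. 1 \<le> p (Suc l) \<and> p (Suc l) \<le> q l - 1 \<and> q (Suc l) = q l + p (Suc l) \<and>
        (\<exists>t :: nat \<Rightarrow> nat. \<forall>k\<in>{1..p (Suc l)}.
            t k \<in> {2..q l} - t ` {1..<k} \<and>
            (\<forall>i\<in>{2..q l} - t ` {1..<k}. charR f N r \<xi> x (q l) i \<le> charR f N r \<xi> x (q l) (t k)) \<and>
            x (q l + k) = newpt f N r \<xi> x (q l) (t k)))"

text \<open>K_j and M_j of Theorem 2 (a division by 0 powr _ = 0 yields 0, used when x* is an endpoint).\<close>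
definition Kc :: "(real \<Rightarrow> real) \<Rightarrow> nat \<Rightarrow> (nat \<Rightarrow> real) \<Rightarrow> nat \<Rightarrow> nat \<Rightarrow> real \<Rightarrow> real" where
  "Kc f N x q j xs = max ((zv f x q (j - 1) - f xs) / (xs - pt x q (j - 1)) powr (1 / real N))
                         ((zv f x q j - f xs) / (pt x q j - xs) powr (1 / real N))"

definition Mc :: "(real \<Rightarrow> real) \<Rightarrow> nat \<Rightarrow> (nat \<Rightarrow> real) \<Rightarrow> nat \<Rightarrow> nat \<Rightarrow> real" where
  "Mc f N x q j = \<bar>zv f x q (j - 1) - zv f x q j\<bar> / (pt x q j - pt x q (j - 1)) powr (1 / real N)"

definition limit_point :: "(nat \<Rightarrow> real) \<Rightarrow> real \<Rightarrow> bool" where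
  "limit_point x y \<longleftrightarrow> (\<exists>\<sigma>. strict_mono \<sigma> \<and> (\<lambda>n. x (\<sigma> n)) \<longlonglongrightarrow> y)"

end

theory Submission
  imports Defs
begin



lemma pt_basic:
  assumes inj: "inj_on x {1..n}"
  shows "length (sorted_list_of_set (x ` {1..n})) = n"
    and "set (sorted_list_of_set (x ` {1..n})) = x ` {1..n}"
    and "sorted_wrt (<) (sorted_list_of_set (x ` {1..n}))"
proof -
  show "length (sorted_list_of_set (x ` {1..n})) = n"
    using inj by (simp add: card_image)
  show "set (sorted_list_of_set (x ` {1..n})) = x ` {1..n}" by simp
  show "sorted_wrt (<) (sorted_list_of_set (x ` {1..n}))"
    by (simp add: strict_sorted_list_of_set)
qed

lemma pt_mono:
  assumes inj: "inj_on x {1..n}" and "1 \<le> i" "i < i'" "i' \<le> n"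
  shows "pt x n i < pt x n i'"
proof -
  have "i - 1 < i' - 1" "i' - 1 < n" using assms by auto
  then show ?thesis using pt_basic[OF inj] unfolding pt_def
    by (metis sorted_wrt_nth_less)
qed

lemma pt_in:
  assumes inj: "inj_on x {1..n}" and "1 \<le> i" "i \<le> n"
  shows "pt x n i \<in> x ` {1..n}"
proof -
  have "i - 1 < n" using assms by simp
  then show ?thesis using pt_basic[OF inj] unfolding pt_def by (metis nth_mem)
qed

lemma pt_surj:
  assumes inj: "inj_on x {1..n}" and "s \<in> x ` {1..n}"
  shows "\<exists>i\<in>{1..n}. pt x n i = s"
proof -
  have "s \<in> set (sorted_list_of_set (x ` {1..n}))" using pt_basic[OF inj] assms by simp
  then obtain k where k: "k < n" "sorted_list_of_set (x ` {1..n}) ! k = s"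
    using pt_basic(1)[OF inj] by (metis in_set_conv_nth)
  show ?thesis by (rule bexI[of _ "Suc k"]) (use k in \<open>auto simp: pt_def\<close>)
qed

lemma pt_consec:
  assumes inj: "inj_on x {1..n}" and "2 \<le> i" "i \<le> n" "s \<in> x ` {1..n}"
    and "pt x n (i - 1) < s" "s < pt x n i"
  shows False
proof -
  obtain k where k: "k \<in> {1..n}" "pt x n k = s" using pt_surj[OF inj assms(4)] by blast
  have "\<not> k \<le> i - 1"
  proof
    assume "k \<le> i - 1"
    then have "pt x n k \<le> pt x n (i - 1)"
    proof (cases "k = i - 1")
      case False
      then have "k < i - 1" using \<open>k \<le> i - 1\<close> by simp
      have "pt x n k < pt x n (i - 1)" by (rule pt_mono[OF inj]) (use \<open>k < i - 1\<close> k assms in auto)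
      then show ?thesis by simp
    qed simp
    then show False using k assms by simp
  qed
  moreover have "\<not> k \<ge> i"
  proof
    assume "k \<ge> i"
    then have "pt x n i \<le> pt x n k"
    proof (cases "k = i")
      case False
      then have "i < k" using \<open>k \<ge> i\<close> by simp
      have "pt x n i < pt x n k" by (rule pt_mono[OF inj]) (use \<open>i < k\<close> k assms in auto)
      then show ?thesis by simp
    qed simp
    then show False using k assms by simp
  qed
  ultimately show False by simp
qed




lemma powr_sum_le:
  fixes a b \<alpha> :: real
  assumes a: "0 \<le> a" and b: "0 \<le> b" and al: "0 < \<alpha>" "\<alpha> \<le> 1"
  shows "a powr \<alpha> + b powr \<alpha> \<le> 2 powr (1 - \<alpha>) * (a + b) powr \<alpha>"
proof -
  have g1: "1 \<le> (2::real) powr (1 - \<alpha>)" using al by (intro ge_one_powr_ge_zero) auto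
  consider "a = 0" | "b = 0" | "a > 0" "b > 0" using a b by linarith
  then show ?thesis
  proof cases
    case 1
    then show ?thesis using g1 b by (simp add: mult_le_cancel_right1)
  next
    case 2
    then show ?thesis using g1 a by (simp add: mult_le_cancel_right1)
  next
    case 3
    define w where "w = (a + b) / 2"
    have w: "w > 0" using 3 w_def by simp
    have y1: "a powr \<alpha> * w powr (1 - \<alpha>) \<le> \<alpha> * a + (1 - \<alpha>) * w"
      by (rule Youngs_inequality_0) (use al 3 w in auto)
    have y2: "b powr \<alpha> * w powr (1 - \<alpha>) \<le> \<alpha> * b + (1 - \<alpha>) * w"
      by (rule Youngs_inequality_0) (use al 3 w in auto)
    have "(a powr \<alpha> + b powr \<alpha>) * w powr (1 - \<alpha>) \<le> 2 * w"
    proof -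
      have e: "\<alpha>*a + (1-\<alpha>)*w + (\<alpha>*b + (1-\<alpha>)*w) = 2*w" by (simp add: w_def algebra_simps)
      have "(a powr \<alpha> + b powr \<alpha>) * w powr (1 - \<alpha>) = a powr \<alpha> * w powr (1 - \<alpha>) + b powr \<alpha> * w powr (1 - \<alpha>)"
        by (simp add: algebra_simps)
      then show ?thesis using y1 y2 e by linarith
    qed
    also have "2 * w = 2 * w powr \<alpha> * w powr (1 - \<alpha>)"
      using w by (simp add: mult.assoc flip: powr_add)
    finally have "a powr \<alpha> + b powr \<alpha> \<le> 2 * w powr \<alpha>"
      using w by (simp add: mult_le_cancel_right)
    also have "2 * w powr \<alpha> = 2 powr (1 - \<alpha>) * (a + b) powr \<alpha>"
    proof -
      have "(a + b) powr \<alpha> = 2 powr \<alpha> * w powr \<alpha>"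
        unfolding w_def using 3 by (simp add: powr_divide)
      then have "2 powr (1 - \<alpha>) * (a + b) powr \<alpha> = (2 powr (1 - \<alpha>) * 2 powr \<alpha>) * w powr \<alpha>"
        by simp
      also have "2 powr (1 - \<alpha>) * 2 powr \<alpha> = (2::real)"
        by (simp flip: powr_add)
      finally show ?thesis by simp
    qed
    finally show ?thesis .
  qed
qed




lemma gap_alg:
  fixes s e S u M2 :: real
  assumes e: "e > 0" and s: "e \<le> s" "s \<le> S" and u: "0 \<le> u" and M2: "0 \<le> M2" "M2 \<le> u\<^sup>2"
    and cond: "u + sqrt (u\<^sup>2 - M2) \<le> s"
  shows "min (e/4) (3*e\<^sup>2/(16*S)) \<le> s - u + M2 / s"
proof -
  have sp: "s > 0" using e s by simp
  have Sp: "S > 0" using sp s by simp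
  have M2s: "M2 / s \<ge> 0" using M2 sp by simp
  define v where "v = sqrt (u\<^sup>2 - M2)"
  have v: "v \<ge> 0" "v\<^sup>2 = u\<^sup>2 - M2" using M2 by (auto simp: v_def)
  show ?thesis
  proof (cases "u \<le> e/2")
    case True
    then show ?thesis using s M2s e by (intro min.coboundedI1) linarith
  next
    case False
    have M2S: "M2 / S \<le> M2 / s" using M2 sp s by (intro divide_left_mono) auto
    show ?thesis
    proof (cases "v \<ge> u/2")
      case True
      then show ?thesis using cond M2s False unfolding v_def[symmetric] by (intro min.coboundedI1) linarith
    next
      case F2: False
      have "v\<^sup>2 \<le> (u/2)\<^sup>2" using F2 v by (intro power_mono) auto
      then have "M2 \<ge> 3*u\<^sup>2/4" using v by (simp add: power_divide)
      moreover have "u\<^sup>2 \<ge> (e/2)\<^sup>2" using False e by (intro power_mono) auto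
      ultimately have "M2 \<ge> 3*e\<^sup>2/16" by (simp add: power_divide)
      then have "3*e\<^sup>2/(16*S) \<le> M2 / S" using Sp
        by (metis divide_divide_eq_left divide_right_mono less_le)
      then show ?thesis using cond M2S v unfolding v_def[symmetric] by (intro min.coboundedI2) linarith
    qed
  qed
qed




locale pltloc =
  fixes f :: "real \<Rightarrow> real" and N :: nat and r \<xi> H :: real and x :: "nat \<Rightarrow> real" and q p :: "nat \<Rightarrow> nat"
  assumes N: "N \<ge> 1" and r: "r > 1" and xi: "\<xi> > 0"
    and hoelder: "\<forall>a\<in>{0..1}. \<forall>b\<in>{0..1}. \<bar>f a - f b\<bar> \<le> H * \<bar>a - b\<bar> powr (1 / real N)"
    and run: "PLT f N r \<xi> x q p"
begin

lemma alpha: "0 < 1 / real N" "1 / real N \<le> 1" using N by auto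

lemma hold: "a \<in> {0..1} \<Longrightarrow> b \<in> {0..1} \<Longrightarrow> \<bar>f a - f b\<bar> \<le> H * \<bar>a - b\<bar> powr (1 / real N)"
  using hoelder by blast

lemma H_nonneg: "0 \<le> H"
  using hold[of 0 1] by simp

definition good :: "nat \<Rightarrow> bool" where
  "good n \<longleftrightarrow> inj_on x {1..n} \<and> x ` {1..n} \<subseteq> {0..1} \<and> 2 \<le> n"

context
  fixes n assumes g: "good n"
begin

lemma g_inj: "inj_on x {1..n}" using g by (simp add: good_def)

lemma pt01: "i \<in> {1..n} \<Longrightarrow> pt x n i \<in> {0..1}"
  using pt_in[OF g_inj, of i] g by (auto simp: good_def)

lemma pt01m: "i \<in> {2..n} \<Longrightarrow> pt x n (i - 1) \<in> {0..1}"
proof -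
  assume "i \<in> {2..n}"
  then have "i - 1 \<in> {1..n}" by auto
  then show ?thesis by (rule pt01)
qed

lemma pt01i: "i \<in> {2..n} \<Longrightarrow> pt x n i \<in> {0..1}"
  by (rule pt01) auto

lemma dpos: "i \<in> {2..n} \<Longrightarrow> pt x n (i - 1) < pt x n i"
  by (rule pt_mono[OF g_inj]) auto

lemma dpow_pos: "i \<in> {2..n} \<Longrightarrow> 0 < (pt x n i - pt x n (i - 1)) powr (1 / real N)"
proof -
  assume i: "i \<in> {2..n}"
  from dpos[OF i] show ?thesis by simp
qed

lemma zdiff: "i \<in> {2..n} \<Longrightarrow> \<bar>zv f x n i - zv f x n (i - 1)\<bar> \<le> H * (pt x n i - pt x n (i - 1)) powr (1 / real N)"
proof -
  assume i: "i \<in> {2..n}"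
  have "\<bar>zv f x n i - zv f x n (i - 1)\<bar> \<le> H * \<bar>pt x n i - pt x n (i - 1)\<bar> powr (1 / real N)"
    unfolding zv_def by (rule hold) (use pt01i[OF i] pt01m[OF i] in auto)
  then show ?thesis using dpos[OF i] by simp
qed

lemma slope_nonneg: "i \<in> {2..n} \<Longrightarrow> 0 \<le> slope f N x n i"
  unfolding slope_def by simp

lemma slope_le: "i \<in> {2..n} \<Longrightarrow> slope f N x n i \<le> H"
  unfolding slope_def using zdiff dpow_pos by (simp add: pos_divide_le_eq)

lemma Iset_sub: "Iset n i \<subseteq> {2..n}" unfolding Iset_def by auto

lemma lam_ge: "i \<in> {2..n} \<Longrightarrow> slope f N x n i \<le> lam f N x n i"
  unfolding lam_def by (rule Max_ge) (auto simp: Iset_def)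

lemma lam_le: "i \<in> {2..n} \<Longrightarrow> lam f N x n i \<le> H"
  unfolding lam_def using Iset_sub slope_le
  by (subst Max_le_iff) (auto simp: Iset_def)

lemma mu_all_le: "mu_all f N x n \<le> H"
  unfolding mu_all_def using slope_le g
  by (subst Max_le_iff) (auto simp: good_def)

lemma mu_all_ge: "0 \<le> mu_all f N x n"
proof -
  have "2 \<in> {2..n}" using g by (auto simp: good_def)
  then have "slope f N x n 2 \<le> mu_all f N x n" unfolding mu_all_def by (intro Max_ge) auto
  then show ?thesis using slope_nonneg[of 2] \<open>2 \<in> {2..n}\<close> by linarith
qed

lemma Xmax_ge: "i \<in> {2..n} \<Longrightarrow> pt x n i - pt x n (i - 1) \<le> Xmax x n"
  unfolding Xmax_def by (rule Max_ge) auto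

lemma gam_le: "i \<in> {2..n} \<Longrightarrow> gam f N x n i \<le> H"
proof -
  assume i: "i \<in> {2..n}"
  have d: "0 < (pt x n i - pt x n (i - 1)) powr (1 / real N)" using dpow_pos i by simp
  have "(pt x n i - pt x n (i - 1)) powr (1 / real N) \<le> (Xmax x n) powr (1 / real N)"
    using Xmax_ge[OF i] dpos[OF i] alpha by (intro powr_mono2) auto
  then have "(pt x n i - pt x n (i - 1)) powr (1 / real N) / (Xmax x n) powr (1 / real N) \<le> 1"
    using d by (simp add: divide_le_eq)
  then have "gam f N x n i \<le> mu_all f N x n * 1"
    unfolding gam_def using mu_all_ge by (simp add: mult_left_le times_divide_eq_right[symmetric] del: times_divide_eq_right)
  then show ?thesis using mu_all_le by simp
qed

lemma muj_ge_xi: "i \<in> {2..n} \<Longrightarrow> \<xi> \<le> muj f N \<xi> x n i"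
  unfolding muj_def by simp

lemma muj_pos: "i \<in> {2..n} \<Longrightarrow> 0 < muj f N \<xi> x n i"
  using muj_ge_xi xi by fastforce

lemma muj_le: "i \<in> {2..n} \<Longrightarrow> muj f N \<xi> x n i \<le> max H \<xi>"
proof -
  assume i: "i \<in> {2..n}"
  have "lam f N x n i \<le> H" "gam f N x n i \<le> H" using lam_le[OF i] gam_le[OF i] by auto
  then show ?thesis unfolding muj_def by auto
qed

lemma muj_ge_slope: "i \<in> {2..n} \<Longrightarrow> slope f N x n i \<le> muj f N \<xi> x n i"
  unfolding muj_def using lam_ge by fastforce

lemma newpt_bounds:
  assumes i: "i \<in> {2..n}"
  shows "pt x n (i - 1) + (1 - 1/r)/2 * (pt x n i - pt x n (i - 1)) \<le> newpt f N r \<xi> x n i"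
    and "newpt f N r \<xi> x n i \<le> pt x n i - (1 - 1/r)/2 * (pt x n i - pt x n (i - 1))"
proof -
  define a where "a = pt x n (i - 1)"
  define b where "b = pt x n i"
  define D where "D = zv f x n i - zv f x n (i - 1)"
  define \<mu> where "\<mu> = muj f N \<xi> x n i"
  have ab: "a < b" using dpos[OF i] by (simp add: a_def b_def)
  have mu: "0 < \<mu>" using muj_pos[OF i] by (simp add: \<mu>_def)
  have dp: "0 < (b - a) powr (1 / real N)" using ab by simp
  have "\<bar>D\<bar> / (b - a) powr (1 / real N) \<le> \<mu>"
    using muj_ge_slope[OF i] by (simp add: slope_def a_def b_def D_def \<mu>_def)
  then have "\<bar>D\<bar> \<le> \<mu> * (b - a) powr (1 / real N)" using dp by (simp add: pos_divide_le_eq)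
  then have q1: "\<bar>D\<bar> / \<mu> \<le> (b - a) powr (1 / real N)" using mu by (simp add: pos_divide_le_eq mult.commute)
  have "(\<bar>D\<bar> / \<mu>) ^ N \<le> ((b - a) powr (1 / real N)) ^ N"
    using q1 mu by (intro power_mono) auto
  also have "((b - a) powr (1 / real N)) ^ N = b - a"
    using ab N by (simp add: powr_power)
  finally have E: "(\<bar>D\<bar> / \<mu>) ^ N \<le> b - a" .
  have E0: "0 \<le> (\<bar>D\<bar> / \<mu>) ^ N" using mu by simp
  have sg: "\<bar>(\<bar>D\<bar> / \<mu>) ^ N * sgn D\<bar> \<le> b - a"
    using E E0 ab by (cases "D = 0") (auto simp: abs_mult abs_sgn_eq)
  have r0: "0 < r" using r by simp
  have t: "\<bar>1 / (2 * r) * (\<bar>D\<bar> / \<mu>) ^ N * sgn D\<bar> \<le> (b - a) / (2 * r)"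
    using sg r0 by (simp add: abs_mult divide_right_mono mult.assoc)
  have np: "newpt f N r \<xi> x n i = (a + b) / 2 - 1 / (2 * r) * (\<bar>D\<bar> / \<mu>) ^ N * sgn D"
    by (simp add: newpt_def a_def b_def D_def \<mu>_def)
  have e: "(1 - 1/r)/2 * (b - a) = (b - a)/2 - (b - a)/(2*r)" using r0 by (simp add: field_simps)
  have t1: "1 / (2 * r) * (\<bar>D\<bar> / \<mu>) ^ N * sgn D \<le> (b - a) / (2 * r)"
    "- ((b - a) / (2 * r)) \<le> 1 / (2 * r) * (\<bar>D\<bar> / \<mu>) ^ N * sgn D"
    using t by (auto simp only: abs_le_iff)
  have e2: "(a + b) / 2 = a + (b - a)/2" "(a + b) / 2 = b - (b - a)/2" by (simp_all add: field_simps)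
  define W where "W = 1 / (2 * r) * (\<bar>D\<bar> / \<mu>) ^ N * sgn D"
  define V where "V = (b - a) / (2 * r)"
  have np': "newpt f N r \<xi> x n i = (a + b) / 2 - W" using np by (simp add: W_def)
  have t2: "W \<le> V" "- V \<le> W" using t1 by (simp_all add: W_def V_def)
  have e': "(1 - 1/r)/2 * (b - a) = (b - a) / 2 - V" using e by (simp add: V_def)
  show "pt x n (i - 1) + (1 - 1/r)/2 * (pt x n i - pt x n (i - 1)) \<le> newpt f N r \<xi> x n i"
    unfolding a_def[symmetric] b_def[symmetric] np' e' using t2 by (simp add: field_simps)
  show "newpt f N r \<xi> x n i \<le> pt x n i - (1 - 1/r)/2 * (pt x n i - pt x n (i - 1))"
    unfolding a_def[symmetric] b_def[symmetric] np' e' using t2 by (simp add: field_simps)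
qed

lemma charR_lower:
  assumes i: "i \<in> {2..n}"
  shows "- (zv f x n i + zv f x n (i - 1)) < charR f N r \<xi> x n i"
proof -
  define d where "d = r * muj f N \<xi> x n i * (pt x n i - pt x n (i - 1)) powr (1 / real N)"
  have "0 < d" unfolding d_def using r muj_pos[OF i] dpow_pos[OF i] by simp
  then show ?thesis unfolding charR_def Let_def d_def[symmetric]
    by (smt (verit) divide_nonneg_pos zero_le_power2)
qed

lemma charR_upper:
  assumes i: "i \<in> {2..n}"
  shows "charR f N r \<xi> x n i \<le> - (zv f x n i + zv f x n (i - 1))
          + (r * max H \<xi> + H\<^sup>2 / (r * \<xi>)) * (pt x n i - pt x n (i - 1)) powr (1 / real N)"
proof -
  define P where "P = (pt x n i - pt x n (i - 1)) powr (1 / real N)"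
  define D where "D = zv f x n i - zv f x n (i - 1)"
  define \<mu> where "\<mu> = muj f N \<xi> x n i"
  have P: "0 < P" using dpow_pos[OF i] by (simp add: P_def)
  have mu: "\<xi> \<le> \<mu>" "\<mu> \<le> max H \<xi>" using muj_ge_xi[OF i] muj_le[OF i] by (auto simp: \<mu>_def)
  have r0: "0 < r" using r by simp
  have D: "\<bar>D\<bar> \<le> H * P" using zdiff[OF i] by (simp add: D_def P_def)
  have d1: "r * \<mu> * P \<le> r * max H \<xi> * P" using mu r0 P by simp
  have dl: "r * \<xi> * P \<le> r * \<mu> * P" using mu r0 P by simp
  have rxp: "0 < r * \<xi> * P" using r0 xi P by simp
  have "D\<^sup>2 / (r * \<mu> * P) \<le> D\<^sup>2 / (r * \<xi> * P)"
    using dl rxp by (intro divide_left_mono) auto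
  also have "D\<^sup>2 \<le> (H * P)\<^sup>2" using D by (metis abs_ge_zero power2_abs power_mono)
  then have "D\<^sup>2 / (r * \<xi> * P) \<le> (H * P)\<^sup>2 / (r * \<xi> * P)"
    using rxp by (intro divide_right_mono) auto
  also have "(H * P)\<^sup>2 / (r * \<xi> * P) = H\<^sup>2 / (r * \<xi>) * P"
    using P r0 xi by (simp add: power2_eq_square field_simps)
  finally have sq: "D\<^sup>2 / (r * \<mu> * P) \<le> H\<^sup>2 / (r * \<xi>) * P" .
  have "charR f N r \<xi> x n i = r * \<mu> * P + D\<^sup>2 / (r * \<mu> * P) - (zv f x n i + zv f x n (i - 1))"
    unfolding charR_def Let_def P_def D_def \<mu>_def by simp
  then show ?thesis using sq d1 unfolding P_def[symmetric] by (simp add: algebra_simps)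
qed

end
end



context pltloc
begin

lemma c0_pos: "0 < (1 - 1/r)/2" using r by (simp add: field_simps)

lemma newpt_strict:
  assumes g: "good n" and t: "t \<in> {2..n}"
  shows "pt x n (t - 1) < newpt f N r \<xi> x n t" "newpt f N r \<xi> x n t < pt x n t"
proof -
  have d: "0 < pt x n t - pt x n (t - 1)" using dpos[OF g t] by simp
  have "0 < (1 - 1/r)/2 * (pt x n t - pt x n (t - 1))" using c0_pos d by simp
  then show "pt x n (t - 1) < newpt f N r \<xi> x n t" "newpt f N r \<xi> x n t < pt x n t"
    using newpt_bounds[OF g t] by linarith+
qed

lemma newpt_sep:
  assumes g: "good n" and t: "t \<in> {2..n}" "t' \<in> {2..n}" "t < t'"
  shows "newpt f N r \<xi> x n t < newpt f N r \<xi> x n t'"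
proof -
  have "pt x n t \<le> pt x n (t' - 1)"
  proof (cases "t = t' - 1")
    case False
    then have "pt x n t < pt x n (t' - 1)" using t by (intro pt_mono[OF g_inj[OF g]]) auto
    then show ?thesis by simp
  qed simp
  then show ?thesis using newpt_strict[OF g t(1)] newpt_strict[OF g t(2)] by linarith
qed

lemma newpt_notin:
  assumes g: "good n" and t: "t \<in> {2..n}"
  shows "newpt f N r \<xi> x n t \<notin> x ` {1..n}"
proof
  assume "newpt f N r \<xi> x n t \<in> x ` {1..n}"
  then show False using pt_consec[OF g_inj[OF g], of t] newpt_strict[OF g t] t by auto
qed

lemma run_q1: "1 < q 1" and run_x1: "x 1 = 0" and run_x2: "x 2 = 1"
  and run_init: "\<forall>i\<in>{3..q 1}. 0 < x i \<and> x i < 1" and run_inj: "inj_on x {1..q 1}"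
  using run by (auto simp: PLT_def)

lemma run_step: "l \<ge> 1 \<Longrightarrow> 1 \<le> p (Suc l) \<and> p (Suc l) \<le> q l - 1 \<and> q (Suc l) = q l + p (Suc l) \<and>
        (\<exists>t :: nat \<Rightarrow> nat. \<forall>k\<in>{1..p (Suc l)}.
            t k \<in> {2..q l} - t ` {1..<k} \<and>
            (\<forall>i\<in>{2..q l} - t ` {1..<k}. charR f N r \<xi> x (q l) i \<le> charR f N r \<xi> x (q l) (t k)) \<and>
            x (q l + k) = newpt f N r \<xi> x (q l) (t k))"
  using run by (auto simp: PLT_def)

definition T :: "nat \<Rightarrow> nat \<Rightarrow> nat" where
  "T l = (SOME t. \<forall>k\<in>{1..p (Suc l)}.
            t k \<in> {2..q l} - t ` {1..<k} \<and>
            (\<forall>i\<in>{2..q l} - t ` {1..<k}. charR f N r \<xi> x (q l) i \<le> charR f N r \<xi> x (q l) (t k)) \<and>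
            x (q l + k) = newpt f N r \<xi> x (q l) (t k))"

lemma T_prop:
  assumes "l \<ge> 1" "k \<in> {1..p (Suc l)}"
  shows "T l k \<in> {2..q l} - T l ` {1..<k}"
    and "\<forall>i\<in>{2..q l} - T l ` {1..<k}. charR f N r \<xi> x (q l) i \<le> charR f N r \<xi> x (q l) (T l k)"
    and "x (q l + k) = newpt f N r \<xi> x (q l) (T l k)"
proof -
  have ex: "\<exists>t :: nat \<Rightarrow> nat. \<forall>k\<in>{1..p (Suc l)}.
            t k \<in> {2..q l} - t ` {1..<k} \<and>
            (\<forall>i\<in>{2..q l} - t ` {1..<k}. charR f N r \<xi> x (q l) i \<le> charR f N r \<xi> x (q l) (t k)) \<and>
            x (q l + k) = newpt f N r \<xi> x (q l) (t k)"
    using run_step[OF assms(1)] by blast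
  have "\<forall>k\<in>{1..p (Suc l)}.
            T l k \<in> {2..q l} - T l ` {1..<k} \<and>
            (\<forall>i\<in>{2..q l} - T l ` {1..<k}. charR f N r \<xi> x (q l) i \<le> charR f N r \<xi> x (q l) (T l k)) \<and>
            x (q l + k) = newpt f N r \<xi> x (q l) (T l k)"
    unfolding T_def by (rule someI_ex[OF ex])
  then show "T l k \<in> {2..q l} - T l ` {1..<k}"
    and "\<forall>i\<in>{2..q l} - T l ` {1..<k}. charR f N r \<xi> x (q l) i \<le> charR f N r \<xi> x (q l) (T l k)"
    and "x (q l + k) = newpt f N r \<xi> x (q l) (T l k)"
    using assms(2) by auto
qed

lemma q_suc: "l \<ge> 1 \<Longrightarrow> q (Suc l) = q l + p (Suc l) \<and> 1 \<le> p (Suc l)"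
  using run_step by blast

lemma q_ge: "l \<ge> 1 \<Longrightarrow> l + 1 \<le> q l"
proof (induction l rule: nat_induct_at_least)
  case base then show ?case using run_q1 by simp
next
  case (Suc l) then show ?case using q_suc[of l] by simp
qed

lemma q_mono: assumes "1 \<le> l" "l \<le> l'" shows "q l \<le> q l'"
proof -
  obtain d where d: "l' = l + d" using assms le_Suc_ex by blast
  have "q l \<le> q (l + d)" for d
  proof (induction d)
    case (Suc d)
    have "q (Suc (l + d)) = q (l + d) + p (Suc (l + d))" using q_suc[of "l + d"] assms by simp
    then show ?case using Suc by simp
  qed simp
  then show ?thesis using d by simp
qed

lemma q_smono: "1 \<le> l \<Longrightarrow> l < l' \<Longrightarrow> q l < q l'"
proof -
  assume "1 \<le> l" "l < l'"
  then have "q (Suc l) \<le> q l'" by (intro q_mono) auto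
  moreover have "q l < q (Suc l)" using q_suc[of l] \<open>1 \<le> l\<close> by simp
  ultimately show ?thesis by simp
qed

lemma good_all: "l \<ge> 1 \<Longrightarrow> good (q l)"
proof (induction l rule: nat_induct_at_least)
  case base
  have "x ` {1..q 1} \<subseteq> {0..1}"
  proof
    fix y assume "y \<in> x ` {1..q 1}"
    then obtain i where i: "i \<in> {1..q 1}" "y = x i" by blast
    consider "i = 1" | "i = 2" | "i \<in> {3..q 1}" using i by fastforce
    then show "y \<in> {0..1}"
    proof cases
      case 3 then show ?thesis using i run_init by fastforce
    qed (use i run_x1 run_x2 in auto)
  qed
  then show ?case using run_inj run_q1 by (simp add: good_def)
next
  case (Suc l)
  note g = Suc.IH
  have l1: "l \<ge> 1" using Suc by simp
  define P where "P = p (Suc l)"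
  have qs: "q (Suc l) = q l + P" using q_suc[OF l1] by (simp add: P_def)
  have new: "\<And>k. k \<in> {1..P} \<Longrightarrow> T l k \<in> {2..q l} \<and> x (q l + k) = newpt f N r \<xi> x (q l) (T l k)"
    using T_prop[OF l1] by (auto simp: P_def)
  have Tinj: "\<And>k k'. k \<in> {1..P} \<Longrightarrow> k' \<in> {1..P} \<Longrightarrow> k' < k \<Longrightarrow> T l k \<noteq> T l k'"
  proof -
    fix k k' assume k: "k \<in> {1..P}" and k': "k' \<in> {1..P}" and lt: "k' < k"
    have "T l k \<notin> T l ` {1..<k}" using T_prop(1)[OF l1, of k] k by (simp add: P_def)
    moreover have "k' \<in> {1..<k}" using k' lt by auto
    ultimately show "T l k \<noteq> T l k'" by auto
  qed
  have newin: "\<And>k. k \<in> {1..P} \<Longrightarrow> x (q l + k) \<in> {0..1}"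
  proof -
    fix k assume k: "k \<in> {1..P}"
    have t: "T l k \<in> {2..q l}" using new[OF k] by simp
    show "x (q l + k) \<in> {0..1}"
      using new[OF k] newpt_strict[OF g t] pt01i[OF g t] pt01m[OF g t] by auto
  qed
  have newnot: "\<And>k. k \<in> {1..P} \<Longrightarrow> x (q l + k) \<notin> x ` {1..q l}"
    using new newpt_notin[OF g] by auto
  have newinj: "inj_on x {q l + 1..q l + P}"
  proof (rule inj_onI)
    fix a b assume a: "a \<in> {q l + 1..q l + P}" and b: "b \<in> {q l + 1..q l + P}" and e: "x a = x b"
    show "a = b"
    proof (rule ccontr)
      assume ne: "a \<noteq> b"
      define ka where "ka = a - q l"
      define kb where "kb = b - q l"
      have ka: "ka \<in> {1..P}" "a = q l + ka" and kb: "kb \<in> {1..P}" "b = q l + kb"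
        using a b by (auto simp: ka_def kb_def)
      have tne: "T l ka \<noteq> T l kb" using Tinj[OF ka(1) kb(1)] Tinj[OF kb(1) ka(1)] ne ka kb
        by (metis linorder_neqE_nat)
      have ta: "T l ka \<in> {2..q l}" and tb: "T l kb \<in> {2..q l}" using new ka kb by auto
      have "newpt f N r \<xi> x (q l) (T l ka) \<noteq> newpt f N r \<xi> x (q l) (T l kb)"
        using newpt_sep[OF g ta tb] newpt_sep[OF g tb ta] tne by (metis less_irrefl linorder_neqE_nat)
      then show False using e new ka kb by simp
    qed
  qed
  have un: "{1..q (Suc l)} = {1..q l} \<union> {q l + 1..q l + P}" using qs by auto
  have inj: "inj_on x {1..q (Suc l)}"
    unfolding un
  proof (rule inj_on_Un[THEN iffD2], intro conjI)
    show "inj_on x {1..q l}" using g by (simp add: good_def)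
    show "inj_on x {q l + 1..q l + P}" by (rule newinj)
    show "x ` ({1..q l} - {q l + 1..q l + P}) \<inter> x ` ({q l + 1..q l + P} - {1..q l}) = {}"
    proof (rule ccontr)
      assume "x ` ({1..q l} - {q l + 1..q l + P}) \<inter> x ` ({q l + 1..q l + P} - {1..q l}) \<noteq> {}"
      then obtain a b where "a \<in> {1..q l}" "b \<in> {q l + 1..q l + P}" "x a = x b" by blast
      moreover then have "b - q l \<in> {1..P}" "b = q l + (b - q l)" by auto
      ultimately show False using newnot[of "b - q l"] by (metis imageI)
    qed
  qed
  have sub: "x ` {1..q (Suc l)} \<subseteq> {0..1}"
  proof
    fix y assume "y \<in> x ` {1..q (Suc l)}"
    then obtain i where i: "i \<in> {1..q (Suc l)}" "y = x i" by blast
    show "y \<in> {0..1}"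
    proof (cases "i \<le> q l")
      case True
      then have "x i \<in> x ` {1..q l}" using i by auto
      then show ?thesis using g i by (auto simp: good_def)
    next
      case False
      then have "i - q l \<in> {1..P}" "i = q l + (i - q l)" using i qs by auto
      then show ?thesis using newin i by metis
    qed
  qed
  show ?case using inj sub qs g by (simp add: good_def)
qed

end



context pltloc
begin

lemma x01: "m \<ge> 1 \<Longrightarrow> x m \<in> {0..1}"
proof -
  assume m: "m \<ge> 1"
  have "good (q m)" using good_all m by simp
  moreover have "m \<in> {1..q m}" using q_ge[OF m] m by simp
  then have "x m \<in> x ` {1..q m}" by blast
  ultimately show ?thesis by (auto simp: good_def)
qed

lemma inS: "1 \<le> m \<Longrightarrow> m \<le> q l \<Longrightarrow> x m \<in> x ` {1..q l}" by auto

lemma iter_of: assumes "q 1 < m" shows "\<exists>l\<ge>1. q l < m \<and> m \<le> q (Suc l)"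
proof -
  define A where "A = {l. 1 \<le> l \<and> q l < m}"
  have fin: "finite A"
  proof -
    have "A \<subseteq> {..m}" unfolding A_def using q_ge by fastforce
    then show ?thesis by (rule finite_subset) simp
  qed
  have ne: "1 \<in> A" using assms by (simp add: A_def)
  define l where "l = Max A"
  have lA: "l \<in> A" using fin ne unfolding l_def by (intro Max_in) auto
  have "Suc l \<notin> A" using fin l_def by (metis Max_ge Suc_n_not_le_n)
  then show ?thesis using lA by (auto simp: A_def intro!: exI[of _ l])
qed

lemma shrink:
  assumes l: "\<And>n. lj n \<ge> 1" and t: "\<And>n. tn n \<in> {2..q (lj n)}"
    and idx: "strict_mono idx" and blk: "\<And>n. q (lj n) < idx n \<and> idx n \<le> q (Suc (lj n))"
    and w: "\<And>n. x (idx n) = newpt f N r \<xi> x (q (lj n)) (tn n)"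
    and conv: "(\<lambda>n. x (idx n)) \<longlonglongrightarrow> y"
  shows "(\<lambda>n. pt x (q (lj n)) (tn n) - pt x (q (lj n)) (tn n - 1)) \<longlonglongrightarrow> 0"
proof (unfold LIMSEQ_iff, intro allI impI)
  fix \<delta> :: real assume \<delta>: "\<delta> > 0"
  define c where "c = (1 - 1/r)/2"
  have c: "c > 0" using c0_pos by (simp add: c_def)
  obtain M where M: "\<And>n. n \<ge> M \<Longrightarrow> \<bar>x (idx n) - y\<bar> < c * \<delta> / 2"
    using conv[unfolded LIMSEQ_iff, rule_format, of "c * \<delta> / 2"] c \<delta> by auto
  define N0 where "N0 = max M (q (Suc (lj M)) + 1)"
  show "\<exists>no. \<forall>n\<ge>no. norm (pt x (q (lj n)) (tn n) - pt x (q (lj n)) (tn n - 1) - 0) < \<delta>"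
  proof (intro exI allI impI)
    fix n assume n: "N0 \<le> n"
    define L where "L = lj n"
    have g: "good (q L)" using good_all l by (simp add: L_def)
    have tt: "tn n \<in> {2..q L}" using t by (simp add: L_def)
    have dp: "0 < pt x (q L) (tn n) - pt x (q L) (tn n - 1)" using dpos[OF g tt] by simp
    have "\<not> \<delta> \<le> pt x (q L) (tn n) - pt x (q L) (tn n - 1)"
    proof
      assume big: "\<delta> \<le> pt x (q L) (tn n) - pt x (q L) (tn n - 1)"
      have "idx n \<ge> n" using seq_suble[OF idx] by simp
      then have i1: "q (Suc (lj M)) < idx n" using n by (simp add: N0_def)
      have "Suc (lj M) < Suc L"
      proof (rule ccontr)
        assume "\<not> Suc (lj M) < Suc L"
        then have "q (Suc L) \<le> q (Suc (lj M))" by (intro q_mono) auto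
        then show False using i1 blk[of n] by (simp add: L_def)
      qed
      then have "q (Suc (lj M)) \<le> q L" by (intro q_mono) auto
      then have "idx M \<le> q L" using blk[of M] by simp
      moreover have "1 \<le> idx M" using blk[of M] by simp
      ultimately have inS': "x (idx M) \<in> x ` {1..q L}" by auto
      have "\<bar>x (idx M) - y\<bar> < c * \<delta> / 2" "\<bar>x (idx n) - y\<bar> < c * \<delta> / 2" using M n by (auto simp: N0_def)
      then have close: "\<bar>x (idx M) - x (idx n)\<bar> < c * \<delta>" by linarith
      have cd: "c * \<delta> \<le> c * (pt x (q L) (tn n) - pt x (q L) (tn n - 1))" using big c by simp
      have nb: "pt x (q L) (tn n - 1) + c * (pt x (q L) (tn n) - pt x (q L) (tn n - 1)) \<le> x (idx n)"
        "x (idx n) \<le> pt x (q L) (tn n) - c * (pt x (q L) (tn n) - pt x (q L) (tn n - 1))"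
        using newpt_bounds[OF g tt] w[of n] by (simp_all add: c_def L_def)
      have "pt x (q L) (tn n - 1) < x (idx M)" "x (idx M) < pt x (q L) (tn n)"
        using close cd nb by (auto simp: abs_less_iff)
      then show False
        using pt_consec[OF g_inj[OF g] _ _ inS', of "tn n"] tt by auto
    qed
    then show "norm (pt x (q (lj n)) (tn n) - pt x (q (lj n)) (tn n - 1) - 0) < \<delta>"
      using dp by (simp add: L_def)
  qed
qed

end



context pltloc
begin

lemma charR_lim:
  assumes l: "\<And>n. lj n \<ge> 1" and t: "\<And>n. tn n \<in> {2..q (lj n)}"
    and idx: "strict_mono idx" and blk: "\<And>n. q (lj n) < idx n \<and> idx n \<le> q (Suc (lj n))"
    and w: "\<And>n. x (idx n) = newpt f N r \<xi> x (q (lj n)) (tn n)"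
    and conv: "(\<lambda>n. x (idx n)) \<longlonglongrightarrow> y"
    and e: "\<epsilon> > 0"
  shows "eventually (\<lambda>n. charR f N r \<xi> x (q (lj n)) (tn n) < -2 * f y + \<epsilon>) sequentially"
proof -
  define a where "a n = pt x (q (lj n)) (tn n - 1)" for n
  define b where "b n = pt x (q (lj n)) (tn n)" for n
  define D where "D n = b n - a n" for n
  define C where "C = r * max H \<xi> + H\<^sup>2 / (r * \<xi>)"
  have g: "\<And>n. good (q (lj n))" using good_all l by simp
  have De: "D = (\<lambda>n. pt x (q (lj n)) (tn n) - pt x (q (lj n)) (tn n - 1))"
    by (simp add: D_def a_def b_def fun_eq_iff)
  have D0: "D \<longlonglongrightarrow> 0" unfolding De by (rule shrink[OF l t idx blk w conv])
  have c: "0 < (1 - 1/r)/2" by (rule c0_pos)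
  have ab: "\<And>n. a n \<le> x (idx n) \<and> x (idx n) \<le> b n"
    using newpt_strict[OF g t] w by (simp add: a_def b_def less_imp_le)
  have y01: "y \<in> {0..1}"
  proof -
    have "\<And>n. x (idx n) \<in> {0..1}"
    proof -
      fix n have "idx n \<ge> 1" using blk[of n] by simp
      then show "x (idx n) \<in> {0..1}" by (rule x01)
    qed
    then have "\<forall>n. 0 \<le> x (idx n)" "\<forall>n. x (idx n) \<le> 1" by auto
    then show ?thesis using LIMSEQ_le_const[OF conv, of 0] LIMSEQ_le_const2[OF conv, of 1] by auto
  qed
  have bw: "(\<lambda>n. b n - x (idx n)) \<longlonglongrightarrow> 0"
    by (rule tendsto_sandwich[of "\<lambda>_. 0" _ _ D]) (use ab D0 in \<open>auto simp: D_def\<close>)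
  have aw: "(\<lambda>n. x (idx n) - a n) \<longlonglongrightarrow> 0"
    by (rule tendsto_sandwich[of "\<lambda>_. 0" _ _ D]) (use ab D0 in \<open>auto simp: D_def\<close>)
  have bl: "b \<longlonglongrightarrow> y" using tendsto_add[OF conv bw] by simp
  have al: "a \<longlonglongrightarrow> y" using tendsto_diff[OF conv aw] by simp
  have a01: "\<And>n. a n \<in> {0..1}" using pt01m[OF g t] by (simp add: a_def)
  have b01: "\<And>n. b n \<in> {0..1}" using pt01i[OF g t] by (simp add: b_def)
  have fl: "(\<lambda>n. f (s n)) \<longlonglongrightarrow> f y" if s: "s \<longlonglongrightarrow> y" "\<And>n. s n \<in> {0..1}" for s
  proof -
    have z: "(\<lambda>n. \<bar>s n - y\<bar>) \<longlonglongrightarrow> 0" using s(1) by (simp add: LIM_zero tendsto_rabs_zero)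
    have "(\<lambda>n. \<bar>s n - y\<bar> powr (1 / real N)) \<longlonglongrightarrow> 0"
      by (rule tendsto_zero_powrI[OF z]) (use alpha in auto)
    then have lim: "(\<lambda>n. H * \<bar>s n - y\<bar> powr (1 / real N)) \<longlonglongrightarrow> 0"
      by (rule tendsto_mult_right_zero)
    have ev: "\<forall>\<^sub>F n in sequentially. norm (f (s n) - f y) \<le> H * \<bar>s n - y\<bar> powr (1 / real N)"
      using hold[OF s(2) y01] by simp
    have "(\<lambda>n. f (s n) - f y) \<longlonglongrightarrow> 0" by (rule Lim_null_comparison[OF ev lim])
    then show ?thesis by (simp add: LIM_zero_iff)
  qed
  have Dp: "(\<lambda>n. D n powr (1 / real N)) \<longlonglongrightarrow> 0"
  proof (rule tendsto_zero_powrI[OF D0])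
    have "\<And>n. 0 \<le> D n" using ab unfolding D_def by (meson diff_ge_0_iff_ge order_trans)
    then show "\<forall>\<^sub>F n in sequentially. 0 \<le> D n" by simp
  qed (use alpha in auto)
  have U: "(\<lambda>n. - (f (b n) + f (a n)) + C * D n powr (1 / real N)) \<longlonglongrightarrow> - (f y + f y) + C * 0"
    by (intro tendsto_intros fl[OF bl b01] fl[OF al a01] Dp)
  have ev: "eventually (\<lambda>n. - (f (b n) + f (a n)) + C * D n powr (1 / real N) < -2 * f y + \<epsilon>) sequentially"
    using order_tendstoD(2)[OF U, of "-2 * f y + \<epsilon>"] e by simp
  have le: "\<And>n. charR f N r \<xi> x (q (lj n)) (tn n) \<le> - (f (b n) + f (a n)) + C * D n powr (1 / real N)"
    using charR_upper[OF g t] by (simp add: a_def b_def D_def C_def zv_def)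
  show ?thesis using ev by (rule eventually_mono) (meson le le_less_trans)
qed

end



context pltloc
begin

lemma gap_bound:
  assumes g: "good n" and j: "j \<in> {2..n}" and xs: "xs \<in> {0..1}" "\<forall>u\<in>{0..1}. f xs \<le> f u"
    and pos: "pt x n (j - 1) \<le> xs" "xs \<le> pt x n j"
    and c1: "4 powr (1 - 1 / real N) * (Kc f N x n j xs)\<^sup>2 \<ge> (Mc f N x n j)\<^sup>2"
    and c2: "r * muj f N \<xi> x n j \<ge> 2 powr (1 - 1 / real N) * Kc f N x n j xs
          + sqrt (4 powr (1 - 1 / real N) * (Kc f N x n j xs)\<^sup>2 - (Mc f N x n j)\<^sup>2)"
  shows "-2 * f xs + min (r*\<xi>/4) (3*(r*\<xi>)\<^sup>2/(16*(r * max H \<xi>))) * (pt x n j - pt x n (j - 1)) powr (1 / real N)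
         \<le> charR f N r \<xi> x n j"
proof -
  define \<alpha> where "\<alpha> = 1 / real N"
  define a0 where "a0 = pt x n (j - 1)"
  define b0 where "b0 = pt x n j"
  define P where "P = (b0 - a0) powr \<alpha>"
  define K where "K = Kc f N x n j xs"
  define M where "M = Mc f N x n j"
  define s where "s = r * muj f N \<xi> x n j"
  define c where "c = (2::real) powr (1 - \<alpha>)"
  define za where "za = zv f x n (j - 1)"
  define zb where "zb = zv f x n j"
  have al: "0 < \<alpha>" "\<alpha> \<le> 1" using alpha by (auto simp: \<alpha>_def)
  have ab: "a0 < b0" using dpos[OF g j] by (simp add: a0_def b0_def)
  have P: "0 < P" using ab by (simp add: P_def)
  have a01: "a0 \<in> {0..1}" using pt01m[OF g j] by (simp add: a0_def)
  have b01: "b0 \<in> {0..1}" using pt01i[OF g j] by (simp add: b0_def)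
  have za: "f xs \<le> za" using xs a01 by (simp add: za_def zv_def a0_def)
  have zb: "f xs \<le> zb" using xs b01 by (simp add: zb_def zv_def b0_def)
  have Kdef: "K = max ((za - f xs) / (xs - a0) powr \<alpha>) ((zb - f xs) / (b0 - xs) powr \<alpha>)"
    by (simp add: K_def Kc_def za_def zb_def a0_def b0_def \<alpha>_def)
  have K0: "0 \<le> K" unfolding Kdef using za by (simp add: le_max_iff_disj)
  have ka: "za - f xs \<le> K * (xs - a0) powr \<alpha>"
  proof (cases "xs = a0")
    case True then show ?thesis using xs by (simp add: za_def zv_def a0_def)
  next
    case False
    then have pp: "0 < (xs - a0) powr \<alpha>" using pos by (simp add: a0_def)
    have "(za - f xs) / (xs - a0) powr \<alpha> \<le> K" unfolding Kdef by simp
    then show ?thesis using pp by (simp add: pos_divide_le_eq)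
  qed
  have kb: "zb - f xs \<le> K * (b0 - xs) powr \<alpha>"
  proof (cases "xs = b0")
    case True then show ?thesis using xs by (simp add: zb_def zv_def b0_def)
  next
    case False
    then have pp: "0 < (b0 - xs) powr \<alpha>" using pos by (simp add: b0_def)
    have "(zb - f xs) / (b0 - xs) powr \<alpha> \<le> K" unfolding Kdef by simp
    then show ?thesis using pp by (simp add: pos_divide_le_eq)
  qed
  have conc: "(xs - a0) powr \<alpha> + (b0 - xs) powr \<alpha> \<le> c * P"
    using powr_sum_le[of "xs - a0" "b0 - xs" \<alpha>] pos al by (simp add: c_def P_def a0_def b0_def)
  have sum: "za + zb - 2 * f xs \<le> c * K * P"
  proof -
    have "za + zb - 2 * f xs \<le> K * ((xs - a0) powr \<alpha> + (b0 - xs) powr \<alpha>)"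
      using ka kb by (simp add: algebra_simps)
    also have "\<dots> \<le> K * (c * P)" by (rule mult_left_mono[OF conc K0])
    finally show ?thesis by (simp add: mult_ac)
  qed
  have Mdef: "M = \<bar>za - zb\<bar> / P" by (simp add: M_def Mc_def za_def zb_def P_def a0_def b0_def \<alpha>_def)
  have MP: "M * P = \<bar>za - zb\<bar>" using P unfolding Mdef by simp
  have D2: "(zb - za)\<^sup>2 = M\<^sup>2 * P\<^sup>2"
  proof -
    have "(zb - za)\<^sup>2 = \<bar>za - zb\<bar>\<^sup>2" by (simp add: power2_eq_square algebra_simps)
    also have "\<dots> = (M * P)\<^sup>2" using MP by simp
    finally show ?thesis by (simp add: power_mult_distrib)
  qed
  have c4: "4 powr (1 - \<alpha>) = c\<^sup>2"
  proof -
    have "(4::real) powr (1 - \<alpha>) = (2 * 2) powr (1 - \<alpha>)" by simp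
    also have "\<dots> = 2 powr (1 - \<alpha>) * 2 powr (1 - \<alpha>)" by (rule powr_mult)
    finally show ?thesis by (simp add: c_def power2_eq_square)
  qed
  have cK0: "0 \<le> c * K" using K0 by (simp add: c_def)
  have cc1: "M\<^sup>2 \<le> (c * K)\<^sup>2" using c1 c4 by (simp add: \<alpha>_def K_def M_def power_mult_distrib)
  have cc2: "c * K + sqrt ((c * K)\<^sup>2 - M\<^sup>2) \<le> s" using c2 c4
    by (simp add: \<alpha>_def K_def M_def s_def power_mult_distrib c_def)
  have mu: "\<xi> \<le> muj f N \<xi> x n j" "muj f N \<xi> x n j \<le> max H \<xi>" using muj_ge_xi[OF g j] muj_le[OF g j] by auto
  have r0: "0 < r" using r by simp
  have s1: "r * \<xi> \<le> s" using mu r0 by (simp add: s_def)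
  have s2: "s \<le> r * max H \<xi>" using mu r0 by (simp add: s_def)
  have rx: "0 < r * \<xi>" using r0 xi by simp
  have sp: "0 < s" using s1 rx by simp
  have gap: "min (r*\<xi>/4) (3*(r*\<xi>)\<^sup>2/(16*(r * max H \<xi>))) \<le> s - c * K + M\<^sup>2 / s"
    by (rule gap_alg[OF rx s1 s2 cK0 _ cc1 cc2]) simp
  have R: "charR f N r \<xi> x n j = s * P + (zb - za)\<^sup>2 / (s * P) - (zb + za)"
    by (simp add: charR_def Let_def s_def P_def za_def zb_def a0_def b0_def \<alpha>_def)
  have "(zb - za)\<^sup>2 / (s * P) = M\<^sup>2 / s * P" using D2 P sp by (simp add: power2_eq_square field_simps)
  then have R2: "charR f N r \<xi> x n j = P * (s + M\<^sup>2 / s) - (zb + za)" using R by (simp add: algebra_simps)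
  have "min (r*\<xi>/4) (3*(r*\<xi>)\<^sup>2/(16*(r * max H \<xi>))) * P \<le> (s - c * K + M\<^sup>2 / s) * P"
    using gap P by (simp add: mult_right_mono)
  moreover have "(s - c * K + M\<^sup>2 / s) * P = P * (s + M\<^sup>2 / s) - c * K * P" by (simp add: algebra_simps)
  ultimately have "-2 * f xs + min (r*\<xi>/4) (3*(r*\<xi>)\<^sup>2/(16*(r * max H \<xi>))) * P \<le> charR f N r \<xi> x n j"
    using R2 sum by linarith
  then show ?thesis unfolding P_def a0_def b0_def \<alpha>_def .
qed

end



context pltloc
begin

lemma limit01:
  assumes conv: "(\<lambda>n. x (idx n)) \<longlonglongrightarrow> y" and i1: "\<And>n. idx n \<ge> 1"
  shows "y \<in> {0..1}"
proof -
  have "\<And>n. x (idx n) \<in> {0..1}" using x01 i1 by blast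
  then have "\<forall>n. 0 \<le> x (idx n)" "\<forall>n. x (idx n) \<le> 1" by auto
  then show ?thesis using LIMSEQ_le_const[OF conv, of 0] LIMSEQ_le_const2[OF conv, of 1] by auto
qed

lemma pt_mono_le:
  assumes g: "good n" and "1 \<le> i" "i \<le> i'" "i' \<le> n"
  shows "pt x n i \<le> pt x n i'"
proof (cases "i = i'")
  case False
  then have "pt x n i < pt x n i'" using assms by (intro pt_mono[OF g_inj[OF g]]) auto
  then show ?thesis by simp
qed simp

lemma xstar_dense:
  fixes xs :: real and j :: "nat \<Rightarrow> nat" and hs :: "nat set"
  assumes xstar: "xs \<in> {0..1}" "\<forall>u\<in>{0..1}. f xs \<le> f u"
    and jint: "\<forall>l\<ge>1. j l \<in> {2..q l} \<and> pt x (q l) (j l - 1) \<le> xs \<and> xs \<le> pt x (q l) (j l)"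
    and hs: "infinite hs" "hs \<subseteq> {1..}"
    and cond: "\<forall>l\<in>hs.
        4 powr (1 - 1 / real N) * (Kc f N x (q l) (j l) xs)\<^sup>2 \<ge> (Mc f N x (q l) (j l))\<^sup>2 \<and>
        r * muj f N \<xi> x (q l) (j l) \<ge> 2 powr (1 - 1 / real N) * Kc f N x (q l) (j l) xs
          + sqrt (4 powr (1 - 1 / real N) * (Kc f N x (q l) (j l) xs)\<^sup>2 - (Mc f N x (q l) (j l))\<^sup>2)"
    and \<rho>: "\<rho> > 0"
  shows "infinite {m. 1 \<le> m \<and> \<bar>x m - xs\<bar> < \<rho>}"
proof
  assume fin: "finite {m. 1 \<le> m \<and> \<bar>x m - xs\<bar> < \<rho>}"
  define Fs where "Fs = x ` {m. 1 \<le> m \<and> \<bar>x m - xs\<bar> < \<rho>}"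
  have finF: "finite Fs" using fin by (simp add: Fs_def)
  define Ds where "Ds = (\<lambda>(u, v). \<bar>u - v\<bar>) ` {uv \<in> Fs \<times> Fs. fst uv \<noteq> snd uv}"
  have finD: "finite Ds" unfolding Ds_def using finF by auto
  define \<delta>0 where "\<delta>0 = Min (insert \<rho> Ds)"
  have Dpos: "\<forall>d\<in>Ds. 0 < d" unfolding Ds_def by auto
  have d0: "0 < \<delta>0" unfolding \<delta>0_def using finD Dpos \<rho> by (subst Min_gr_iff) auto
  have d0le: "\<And>d. d \<in> insert \<rho> Ds \<Longrightarrow> \<delta>0 \<le> d" unfolding \<delta>0_def using finD by auto
  have Dbig: "\<delta>0 \<le> pt x (q l) (j l) - pt x (q l) (j l - 1)" if l: "l \<ge> 1" for l
  proof (rule ccontr)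
    assume small: "\<not> \<delta>0 \<le> pt x (q l) (j l) - pt x (q l) (j l - 1)"
    have g: "good (q l)" using good_all l by simp
    have jj: "j l \<in> {2..q l}" and p1: "pt x (q l) (j l - 1) \<le> xs" and p2: "xs \<le> pt x (q l) (j l)"
      using jint l by auto
    have lt: "pt x (q l) (j l - 1) < pt x (q l) (j l)" using dpos[OF g jj] .
    have dr: "\<delta>0 \<le> \<rho>" using d0le by simp
    have inF: "pt x (q l) i \<in> Fs" if i: "i \<in> {1..q l}" "\<bar>pt x (q l) i - xs\<bar> < \<rho>" for i
    proof -
      obtain m where m: "m \<in> {1..q l}" "x m = pt x (q l) i" using pt_in[OF g_inj[OF g] _ _] i by force
      then show ?thesis using i unfolding Fs_def by force
    qed
    have i1: "j l - 1 \<in> {1..q l}" "j l \<in> {1..q l}" using jj by auto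
    have a: "pt x (q l) (j l - 1) \<in> Fs" by (rule inF[OF i1(1)]) (use small p1 p2 dr in auto)
    have b: "pt x (q l) (j l) \<in> Fs" by (rule inF[OF i1(2)]) (use small p1 p2 dr in auto)
    have "\<bar>pt x (q l) (j l) - pt x (q l) (j l - 1)\<bar> \<in> Ds"
      unfolding Ds_def using a b lt by (intro image_eqI[of _ _ "(pt x (q l) (j l), pt x (q l) (j l - 1))"]) auto
    then have "\<delta>0 \<le> \<bar>pt x (q l) (j l) - pt x (q l) (j l - 1)\<bar>" using d0le by simp
    then show False using small lt by simp
  qed
  define \<kappa> where "\<kappa> = min (r*\<xi>/4) (3*(r*\<xi>)\<^sup>2/(16*(r * max H \<xi>)))"
  have rx: "0 < r * \<xi>" using r xi by simp
  have rm: "0 < r * max H \<xi>" using r xi by (simp add: less_max_iff_disj)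
  have "0 < 3 * (r * \<xi>)\<^sup>2 / (16 * (r * max H \<xi>))" using rx rm by (intro divide_pos_pos) auto
  then have kp: "0 < \<kappa>" unfolding \<kappa>_def using rx by simp
  define \<epsilon> where "\<epsilon> = \<kappa> * \<delta>0 powr (1 / real N)"
  have ep: "0 < \<epsilon>" unfolding \<epsilon>_def using kp d0 by simp
  have Rbig: "-2 * f xs + \<epsilon> \<le> charR f N r \<xi> x (q l) (T l 1)" if l: "l \<in> hs" for l
  proof -
    have l1: "l \<ge> 1" using l hs by auto
    have g: "good (q l)" using good_all l1 by simp
    have jj: "j l \<in> {2..q l}" and p1: "pt x (q l) (j l - 1) \<le> xs" and p2: "xs \<le> pt x (q l) (j l)"
      using jint l1 by auto
    have gb: "-2 * f xs + \<kappa> * (pt x (q l) (j l) - pt x (q l) (j l - 1)) powr (1 / real N)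
         \<le> charR f N r \<xi> x (q l) (j l)"
      unfolding \<kappa>_def by (rule gap_bound[OF g jj xstar p1 p2]) (use cond l in auto)
    have "\<delta>0 powr (1 / real N) \<le> (pt x (q l) (j l) - pt x (q l) (j l - 1)) powr (1 / real N)"
      using Dbig[OF l1] d0 alpha by (intro powr_mono2) auto
    then have "\<epsilon> \<le> \<kappa> * (pt x (q l) (j l) - pt x (q l) (j l - 1)) powr (1 / real N)"
      unfolding \<epsilon>_def using kp by simp
    moreover have k1: "1 \<in> {1..p (Suc l)}" using q_suc[OF l1] by simp
    have "charR f N r \<xi> x (q l) (j l) \<le> charR f N r \<xi> x (q l) (T l 1)"
      using T_prop(2)[OF l1 k1] jj by simp
    ultimately show ?thesis using gb by linarith
  qed
  define e where "e = enumerate hs"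
  have e: "strict_mono e" "\<And>n. e n \<in> hs" using hs(1) by (auto simp: e_def strict_mono_enumerate enumerate_in_set)
  have e1: "\<And>n. e n \<ge> 1" using e(2) hs(2) by auto
  have "bounded (range (\<lambda>n. x (q (e n) + 1)))"
  proof -
    have "range (\<lambda>n. x (q (e n) + 1)) \<subseteq> {0..1}" using x01 by auto
    then show ?thesis by (rule bounded_subset[OF bounded_closed_interval])
  qed
  then obtain y' \<sigma> where \<sigma>: "strict_mono \<sigma>" "((\<lambda>n. x (q (e n) + 1)) \<circ> \<sigma>) \<longlonglongrightarrow> y'"
    using bounded_imp_convergent_subsequence by blast
  define lj where "lj n = e (\<sigma> n)" for n
  define tn where "tn n = T (lj n) 1" for n
  define idx where "idx n = q (lj n) + 1" for n
  have lj1: "\<And>n. lj n \<ge> 1" using e1 by (simp add: lj_def)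
  have ljm: "strict_mono lj" unfolding lj_def using e(1) \<sigma>(1) by (simp add: strict_mono_def)
  have k1: "\<And>n. 1 \<in> {1..p (Suc (lj n))}" using q_suc lj1 by simp
  have t: "\<And>n. tn n \<in> {2..q (lj n)}" using T_prop(1)[OF lj1 k1] by (simp add: tn_def)
  have idx: "strict_mono idx" unfolding idx_def strict_mono_def
    using ljm lj1 q_smono by (simp add: strict_mono_def)
  have blk: "\<And>n. q (lj n) < idx n \<and> idx n \<le> q (Suc (lj n))" using q_suc lj1 by (simp add: idx_def)
  have w: "\<And>n. x (idx n) = newpt f N r \<xi> x (q (lj n)) (tn n)"
    using T_prop(3)[OF lj1 k1] by (simp add: idx_def tn_def)
  have conv: "(\<lambda>n. x (idx n)) \<longlonglongrightarrow> y'" using \<sigma>(2) by (simp add: idx_def lj_def o_def)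
  have y01: "y' \<in> {0..1}" by (rule limit01[OF conv]) (simp add: idx_def)
  have "eventually (\<lambda>n. charR f N r \<xi> x (q (lj n)) (tn n) < -2 * f y' + \<epsilon>) sequentially"
    by (rule charR_lim[OF lj1 t idx blk w conv ep])
  then obtain n where n: "charR f N r \<xi> x (q (lj n)) (tn n) < -2 * f y' + \<epsilon>"
    by (meson eventually_sequentially order_refl)
  have "-2 * f xs + \<epsilon> \<le> charR f N r \<xi> x (q (lj n)) (tn n)"
    using Rbig[of "lj n"] e(2) by (simp add: tn_def lj_def)
  moreover have "f xs \<le> f y'" using xstar y01 by blast
  ultimately show False using n by linarith
qed

end



context pltloc
begin

lemma main:
  fixes xs :: real and j :: "nat \<Rightarrow> nat" and hs :: "nat set" and Q :: nat
  assumes pbound: "\<forall>l>1. p l \<le> Q"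
    and xstar: "xs \<in> {0..1}" "\<forall>u\<in>{0..1}. f xs \<le> f u"
    and jint: "\<forall>l\<ge>1. j l \<in> {2..q l} \<and> pt x (q l) (j l - 1) \<le> xs \<and> xs \<le> pt x (q l) (j l)"
    and hs: "infinite hs" "hs \<subseteq> {1..}"
    and cond: "\<forall>l\<in>hs.
        4 powr (1 - 1 / real N) * (Kc f N x (q l) (j l) xs)\<^sup>2 \<ge> (Mc f N x (q l) (j l))\<^sup>2 \<and>
        r * muj f N \<xi> x (q l) (j l) \<ge> 2 powr (1 - 1 / real N) * Kc f N x (q l) (j l) xs
          + sqrt (4 powr (1 - 1 / real N) * (Kc f N x (q l) (j l) xs)\<^sup>2 - (Mc f N x (q l) (j l))\<^sup>2)"
    and lp: "limit_point x y"
  shows "y \<in> {0..1} \<and> (\<forall>u\<in>{0..1}. f y \<le> f u)"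
proof -
  obtain \<sigma> where \<sigma>: "strict_mono \<sigma>" "(\<lambda>n. x (\<sigma> n)) \<longlonglongrightarrow> y" using lp by (auto simp: limit_point_def)
  define s where "s n = \<sigma> (n + q 1 + 1)" for n
  have sm: "strict_mono s" using \<sigma>(1) by (simp add: s_def strict_mono_def)
  have sconv: "(\<lambda>n. x (s n)) \<longlonglongrightarrow> y"
    using LIMSEQ_ignore_initial_segment[OF \<sigma>(2), of "q 1 + 1"] by (simp add: s_def add.assoc)
  have sgt: "\<And>n. q 1 < s n"
  proof -
    fix n have "n + q 1 + 1 \<le> \<sigma> (n + q 1 + 1)" by (rule seq_suble[OF \<sigma>(1)])
    then show "q 1 < s n" by (simp add: s_def)
  qed
  define lj where "lj n = (SOME l. l \<ge> 1 \<and> q l < s n \<and> s n \<le> q (Suc l))" for n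
  have ljp: "\<And>n. lj n \<ge> 1 \<and> q (lj n) < s n \<and> s n \<le> q (Suc (lj n))"
    unfolding lj_def by (rule someI_ex) (rule iter_of[OF sgt])
  define kn where "kn n = s n - q (lj n)" for n
  have kn: "\<And>n. kn n \<in> {1..p (Suc (lj n))}"
  proof -
    fix n
    have a: "1 \<le> lj n" "q (lj n) < s n" "s n \<le> q (Suc (lj n))" using ljp[of n] by auto
    have "q (Suc (lj n)) = q (lj n) + p (Suc (lj n))" using q_suc[OF a(1)] by simp
    then show "kn n \<in> {1..p (Suc (lj n))}" using a unfolding kn_def by auto
  qed
  have lj1: "\<And>n. lj n \<ge> 1" using ljp by blast
  define tn where "tn n = T (lj n) (kn n)" for n
  have t: "\<And>n. tn n \<in> {2..q (lj n)}" using T_prop(1)[OF lj1 kn] by (simp add: tn_def)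
  have blk: "\<And>n. q (lj n) < s n \<and> s n \<le> q (Suc (lj n))" using ljp by blast
  have w: "\<And>n. x (s n) = newpt f N r \<xi> x (q (lj n)) (tn n)"
  proof -
    fix n have "s n = q (lj n) + kn n" using ljp[of n] by (simp add: kn_def)
    then show "x (s n) = newpt f N r \<xi> x (q (lj n)) (tn n)" using T_prop(3)[OF lj1 kn] by (simp add: tn_def)
  qed
  have y01: "y \<in> {0..1}"
  proof (rule limit01[OF sconv])
    fix n show "1 \<le> s n" using sgt[of n] by simp
  qed
  have "f y \<le> f xs"
  proof (rule ccontr)
    assume "\<not> f y \<le> f xs"
    then have fy: "f xs < f y" by simp
    define \<delta> where "\<delta> = (f y - f xs) / 4"
    have \<delta>: "0 < \<delta>" using fy by (simp add: \<delta>_def)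
    have H0: "0 \<le> H" by (rule H_nonneg)
    define \<rho> where "\<rho> = (\<delta> / (H + 1)) powr real N"
    have dh: "0 < \<delta> / (H + 1)" using \<delta> H0 by simp
    have \<rho>: "0 < \<rho>" using dh \<delta> H0 by (simp add: \<rho>_def)
    have \<rho>a: "\<rho> powr (1 / real N) = \<delta> / (H + 1)"
      using dh N \<delta> H0 by (simp add: \<rho>_def powr_powr)
    have near: "f u < f xs + \<delta>" if u: "u \<in> {0..1}" "\<bar>u - xs\<bar> < \<rho>" for u
    proof -
      have "\<bar>f u - f xs\<bar> \<le> H * \<bar>u - xs\<bar> powr (1 / real N)" by (rule hold[OF u(1) xstar(1)])
      also have "\<dots> \<le> H * (\<delta> / (H + 1))"
      proof -
        have "\<bar>u - xs\<bar> powr (1 / real N) \<le> \<rho> powr (1 / real N)"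
          using u(2) alpha by (intro powr_mono2) auto
        then show ?thesis using \<rho>a H0 by (metis mult_left_mono)
      qed
      also have "\<dots> < \<delta>" using \<delta> H0 by (simp add: field_simps)
      finally show ?thesis by linarith
    qed
    have inf: "infinite {m. 1 \<le> m \<and> \<bar>x m - xs\<bar> < \<rho>}"
      by (rule xstar_dense[OF xstar jint hs cond \<rho>])
    obtain B where B: "finite B" "card B = Q + 2" "B \<subseteq> {m. 1 \<le> m \<and> \<bar>x m - xs\<bar> < \<rho>}"
      using infinite_arbitrarily_large[OF inf] by blast
    have Bne: "B \<noteq> {}" using B by auto
    define L1 where "L1 = Max B"
    have "L1 \<in> B" unfolding L1_def by (rule Max_in[OF B(1) Bne])
    then have L1: "1 \<le> L1" using B(3) by auto
    have Bsub: "B \<subseteq> {1..q l}" if l: "L1 \<le> l" for l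
    proof
      fix m assume m: "m \<in> B"
      have "m \<le> L1" using B(1) m by (simp add: L1_def)
      also have "L1 \<le> q L1" using q_ge[OF L1] by simp
      also have "q L1 \<le> q l" by (rule q_mono[OF L1 l])
      finally show "m \<in> {1..q l}" using B(3) m by auto
    qed
    have chL: "\<forall>\<^sub>F n in sequentially. L1 \<le> lj n"
    proof -
      have "L1 \<le> lj n" if n: "n > q (Suc L1)" for n
      proof (rule ccontr)
        assume "\<not> L1 \<le> lj n"
        then have "q (Suc (lj n)) \<le> q L1" using lj1 by (intro q_mono) auto
        moreover have "q L1 \<le> q (Suc L1)" using L1 by (intro q_mono) auto
        moreover have "n \<le> s n" by (rule seq_suble[OF sm])
        ultimately show False using blk[of n] n by linarith
      qed
      then show ?thesis by (intro eventually_sequentiallyI[of "Suc (q (Suc L1))"]) auto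
    qed
    have chR: "\<forall>\<^sub>F n in sequentially. charR f N r \<xi> x (q (lj n)) (tn n) < -2 * f y + 2 * \<delta>"
      by (rule charR_lim[OF lj1 t sm blk w sconv]) (use \<delta> in simp)
    from eventually_conj[OF chL chR] obtain N0 where
      "\<forall>n\<ge>N0. L1 \<le> lj n \<and> charR f N r \<xi> x (q (lj n)) (tn n) < -2 * f y + 2 * \<delta>"
      unfolding eventually_sequentially by blast
    then obtain n where n1: "L1 \<le> lj n" and n2: "charR f N r \<xi> x (q (lj n)) (tn n) < -2 * f y + 2 * \<delta>"
      by blast
    define l where "l = lj n"
    have l1: "1 \<le> l" using lj1 by (simp add: l_def)
    have g: "good (q l)" using good_all l1 by simp
    define J where "J = {i \<in> {1..q l}. \<bar>pt x (q l) i - xs\<bar> < \<rho>}"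
    have finJ: "finite J" by (simp add: J_def)
    have xBJ: "x ` B \<subseteq> pt x (q l) ` J"
    proof
      fix v assume "v \<in> x ` B"
      then obtain m where m: "m \<in> B" "v = x m" by blast
      have mS: "x m \<in> x ` {1..q l}" using Bsub[OF n1[folded l_def]] m by auto
      obtain i where i: "i \<in> {1..q l}" "pt x (q l) i = x m" using pt_surj[OF g_inj[OF g] mS] by blast
      have "\<bar>x m - xs\<bar> < \<rho>" using B(3) m by auto
      then have "i \<in> J" using i by (simp add: J_def)
      then show "v \<in> pt x (q l) ` J" using i m by (metis imageI)
    qed
    have injB: "inj_on x B" using g_inj[OF g] Bsub[OF n1[folded l_def]] by (rule inj_on_subset)
    have "Q + 2 \<le> card J"
    proof -
      have "Q + 2 = card (x ` B)" using B(2) card_image[OF injB] by simp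
      also have "\<dots> \<le> card (pt x (q l) ` J)" by (rule card_mono[OF _ xBJ]) (simp add: finJ)
      also have "\<dots> \<le> card J" by (rule card_image_le[OF finJ])
      finally show ?thesis .
    qed
    then have Jne: "J \<noteq> {}" by auto
    define imin where "imin = Min J"
    define imax where "imax = Max J"
    have iminJ: "imin \<in> J" and imaxJ: "imax \<in> J" using finJ Jne by (simp_all add: imin_def imax_def)
    have Jsub: "J \<subseteq> {imin..imax}" using finJ by (auto simp: imin_def imax_def)
    have "card J \<le> imax + 1 - imin" using card_mono[OF _ Jsub] by simp
    then have gap: "Q + 1 \<le> imax - imin" using \<open>Q + 2 \<le> card J\<close> by linarith
    have bounds: "1 \<le> imin" "imax \<le> q l" using iminJ imaxJ by (auto simp: J_def)
    have ptJ: "\<bar>pt x (q l) imin - xs\<bar> < \<rho>" "\<bar>pt x (q l) imax - xs\<bar> < \<rho>" using iminJ imaxJ by (auto simp: J_def)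
    have inner: "\<bar>pt x (q l) i - xs\<bar> < \<rho>" if i: "imin \<le> i" "i \<le> imax" for i
    proof -
      have "pt x (q l) imin \<le> pt x (q l) i" using pt_mono_le[OF g] i bounds by simp
      moreover have "pt x (q l) i \<le> pt x (q l) imax" using pt_mono_le[OF g] i bounds by simp
      ultimately show ?thesis using ptJ by (simp add: abs_less_iff)
    qed
    have Rin: "-2 * f xs - 2 * \<delta> < charR f N r \<xi> x (q l) i" if i: "i \<in> {imin + 1..imax}" for i
    proof -
      have i2: "i \<in> {2..q l}" using i bounds by auto
      have u1: "f (pt x (q l) i) < f xs + \<delta>"
        by (rule near) (use pt01i[OF g i2] inner[of i] i in auto)
      have u2: "f (pt x (q l) (i - 1)) < f xs + \<delta>"
        by (rule near) (use pt01m[OF g i2] inner[of "i - 1"] i in auto)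
      show ?thesis using charR_lower[OF g i2] u1 u2 by (simp add: zv_def)
    qed
    define k where "k = kn n"
    have k: "k \<in> {1..p (Suc l)}" using kn by (simp add: k_def l_def)
    have Rt: "charR f N r \<xi> x (q l) (T l k) < -2 * f xs - 2 * \<delta>"
    proof -
      have "-2 * f y + 2 * \<delta> \<le> -2 * f xs - 2 * \<delta>" using fy by (simp add: \<delta>_def field_simps)
      then show ?thesis using n2 by (simp add: l_def k_def tn_def)
    qed
    have sub: "{imin + 1..imax} \<subseteq> T l ` {1..<k}"
    proof
      fix i assume i: "i \<in> {imin + 1..imax}"
      have i2: "i \<in> {2..q l}" using i bounds by auto
      show "i \<in> T l ` {1..<k}"
      proof (rule ccontr)
        assume "i \<notin> T l ` {1..<k}"
        then have "charR f N r \<xi> x (q l) i \<le> charR f N r \<xi> x (q l) (T l k)"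
          using T_prop(2)[OF l1 k] i2 by blast
        then show False using Rin[OF i] Rt by linarith
      qed
    qed
    have "imax - imin \<le> card (T l ` {1..<k})"
      using card_mono[OF _ sub] by simp
    also have "\<dots> \<le> card {1..<k}" by (rule card_image_le) simp
    also have "\<dots> < k" using k by simp
    also have "k \<le> Q"
    proof -
      have "p (Suc l) \<le> Q" using pbound l1 by simp
      then show ?thesis using k by simp
    qed
    finally show False using gap by linarith
  qed
  then show ?thesis using y01 xstar by fastforce
qed

end

theorem corollary1:
  fixes f :: "real \<Rightarrow> real" and N :: nat and r \<xi> H xstar :: real
    and x :: "nat \<Rightarrow> real" and q p j :: "nat \<Rightarrow> nat" and Q :: nat and hs :: "nat set"
  assumes N: "N \<ge> 1" and r: "r > 1" and xi: "\<xi> > 0"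
    and hoelder: "\<forall>a\<in>{0..1}. \<forall>b\<in>{0..1}. \<bar>f a - f b\<bar> \<le> H * \<bar>a - b\<bar> powr (1 / real N)"
    and run: "PLT f N r \<xi> x q p"
    and pbound: "\<forall>l>1. p l \<le> Q"
    and xstar: "xstar \<in> {0..1}" "\<forall>u\<in>{0..1}. f xstar \<le> f u"
    and jint: "\<forall>l\<ge>1. j l \<in> {2..q l} \<and> pt x (q l) (j l - 1) \<le> xstar \<and> xstar \<le> pt x (q l) (j l)"
    and hs: "infinite hs" "hs \<subseteq> {1..}"
    and cond: "\<forall>l\<in>hs.
        4 powr (1 - 1 / real N) * (Kc f N x (q l) (j l) xstar)\<^sup>2 \<ge> (Mc f N x (q l) (j l))\<^sup>2 \<and>
        r * muj f N \<xi> x (q l) (j l) \<ge> 2 powr (1 - 1 / real N) * Kc f N x (q l) (j l) xstar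
          + sqrt (4 powr (1 - 1 / real N) * (Kc f N x (q l) (j l) xstar)\<^sup>2 - (Mc f N x (q l) (j l))\<^sup>2)"
  shows "\<forall>y. limit_point x y \<longrightarrow> y \<in> {0..1} \<and> (\<forall>u\<in>{0..1}. f y \<le> f u)"

proof -
  interpret pltloc f N r \<xi> H x q p
    by unfold_locales (use N r xi hoelder run in auto)
  show ?thesis using main[OF pbound xstar jint hs cond] by blast
qed

end
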